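(* Let $n>k\ge1$ be coprime integers, $\eta$ in the upper half-plane, $\Lambda=\mathbb{Z}+\mathbb{Z}\eta$. For every $m\in\mathbb{Z}$, $\lim_{\tau\to0}R_\tau(m\tau)=\mathrm{sym}_m$, where $\mathrm{sym}_m\in\mathrm{End}(V\otimes V)$ is defined by $\mathrm{sym}_m(v\otimes v')=v\otimes v'-m\,v'\otimes v$ (the limit taken over $\tau\in\mathbb{C}\setminus\frac1n\Lambda$ tending to $0$).
   Context: Write $e(z)=e^{2\pi i z}$ and $\theta(z)=\sum_{m\in\mathbb{Z}}(-1)^m e\big(mz+\tfrac12 m(m-1)\eta\big)$. For $\alpha\in\mathbb{Z}$ put $\theta_\alpha(z)=e\big(\alpha z+\tfrac{\alpha}{2n}+\tfrac{\alpha(\alpha-n)}{2n}\eta\big)\prod_{m=0}^{n-1}\theta\big(z+\tfrac mn+\tfrac{\alpha}{n}\eta\big)$, regarded as indexed by $\alpha\in\mathbb{Z}_n$. Let $V$ be an $n$-dimensional complex vector space with basis $x_i$, $i\in\mathbb{Z}_n$. For $\tau\in\mathbb{C}\setminus\frac1n\Lambda$ and $z\in\mathbb{C}$, define $R_\tau(z)\in\mathrm{End}(V\otimes V)$ by $$R_\tau(z)(x_i\otimes x_j)=\frac{\theta_0(-z)\cdots\theta_{n-1}(-z)}{\theta_1(0)\cdots\theta_{n-1}(0)}\sum_{r\in\mathbb{Z}_n}\frac{\theta_{j-i+r(k-1)}(-z+\tau)}{\theta_{j-i-r}(-z)\,\theta_{kr}(\tau)}\,x_{j-r}\otimes x_{i+r}.$$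 *)

theory Defs
  imports "HOL-Analysis.Analysis"
begin

definition ee :: "complex \<Rightarrow> complex" where
  "ee z = exp (2 * of_real pi * \<i> * z)"

definition theta :: "complex \<Rightarrow> complex \<Rightarrow> complex" where
  "theta \<eta> z = (\<Sum>\<^sub>\<infinity>m::int\<in>UNIV.
      (-1) powi m * ee (of_int m * z + of_int (m * (m - 1)) / 2 * \<eta>))"

text \<open>theta_alpha(z); alpha is an integer (the function is n-periodic in alpha)\<close>
definition theta_idx :: "nat \<Rightarrow> complex \<Rightarrow> int \<Rightarrow> complex \<Rightarrow> complex" where
  "theta_idx n \<eta> \<alpha> z =
     ee (of_int \<alpha> * z + of_int \<alpha> / (2 * of_nat n)
         + of_int (\<alpha> * (\<alpha> - int n)) / (2 * of_nat n) * \<eta>)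
     * (\<Prod>m<n. theta \<eta> (z + of_nat m / of_nat n + of_int \<alpha> / of_nat n * \<eta>))"

definition lattice_div :: "nat \<Rightarrow> complex \<Rightarrow> complex set" where
  "lattice_div n \<eta> = {(of_int a + of_int b * \<eta>) / of_nat n | a b. True}"

text \<open>Matrix coefficient of R_tau(z): the coefficient of x_a (x) x_b in R_tau(z)(x_i (x) x_j),
  indices in Z_n represented by integers modulo n.  The factor
  theta_0(-z)...theta_{n-1}(-z) / theta_{j-i-r}(-z) is written in cancelled form
  (product over beta in Z_n other than j-i-r), as a meromorphic identity.\<close>
definition R_coef :: "nat \<Rightarrow> int \<Rightarrow> complex \<Rightarrow> complex \<Rightarrow> complex
                      \<Rightarrow> int \<Rightarrow> int \<Rightarrow> int \<Rightarrow> int \<Rightarrow> complex" where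
  "R_coef n k \<eta> \<tau> z i j a b =
     (\<Sum>r\<in>{0..<int n}.
        if (j - r) mod int n = a mod int n \<and> (i + r) mod int n = b mod int n then
          (\<Prod>\<beta>\<in>{0..<int n} - {(j - i - r) mod int n}. theta_idx n \<eta> \<beta> (- z))
          / (\<Prod>\<beta>\<in>{1..<int n}. theta_idx n \<eta> \<beta> 0)
          * theta_idx n \<eta> (j - i + r * (k - 1)) (- z + \<tau>) / theta_idx n \<eta> (k * r) \<tau>
        else 0)"

definition sym_coef :: "nat \<Rightarrow> int \<Rightarrow> int \<Rightarrow> int \<Rightarrow> int \<Rightarrow> int \<Rightarrow> complex" where
  "sym_coef n m i j a b =
     (if a mod int n = i mod int n \<and> b mod int n = j mod int n then 1 else 0)
     - of_int m * (if a mod int n = j mod int n \<and> b mod int n = i mod int n then 1 else 0)"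

end

theory Submission
  imports Defs "HOL-Complex_Analysis.Complex_Analysis"
begin
lemma ee_add: "ee (a + b) = ee a * ee b"
  by (simp add: ee_def distrib_left exp_add)
lemma ee_diff: "ee (a - b) = ee a / ee b"
  by (simp add: ee_def right_diff_distrib exp_diff)
lemma ee_neg: "ee (-a) = inverse (ee a)"
  by (simp add: ee_def exp_minus)
lemma ee_nonzero[simp]: "ee a \<noteq> 0" by (simp add: ee_def)
lemma ee_zero[simp]: "ee 0 = 1" by (simp add: ee_def)
lemma norm_ee: "norm (ee z) = exp (-2*pi*Im z)"
  by (simp add: ee_def norm_exp_eq_Re)
lemma ee_eq_1_iff: "ee z = 1 \<longleftrightarrow> (\<exists>m::int. z = of_int m)"
proof
  assume "ee z = 1"
  then obtain n::int where "Re (2 * of_real pi * \<i> * z) = 0" "Im (2 * of_real pi * \<i> * z) = of_int (2*n) * pi"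
    unfolding ee_def exp_eq_1 by blast
  then have "Im z = 0" "Re z = of_int n" by auto
  then have "z = of_int n" by (simp add: complex_eq_iff)
  then show "\<exists>m::int. z = of_int m" by blast
next
  assume "\<exists>m::int. z = of_int m"
  then obtain m::int where "z = of_int m" by blast
  then show "ee z = 1" unfolding ee_def exp_eq_1 by (auto intro!: exI[of _ m])
qed
lemma ee_int[simp]: "ee (of_int m) = 1"
  using ee_eq_1_iff by blast
lemma ee_nat[simp]: "ee (of_nat m) = 1"
  using ee_int[of "int m"] by simp
lemma ee_one[simp]: "ee 1 = 1"
  using ee_int[of 1] by simp
lemma ee_half: "ee (1/2) = -1"
  by (simp add: ee_def exp_pi_i')

definition ta :: "complex \<Rightarrow> int \<Rightarrow> complex \<Rightarrow> complex" where
  "ta \<eta> m z = (-1) powi m * ee (of_int m * z + of_int (m * (m - 1)) / 2 * \<eta>)"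

lemma theta_ta: "theta \<eta> z = (\<Sum>\<^sub>\<infinity>m\<in>UNIV. ta \<eta> m z)"
  by (simp add: theta_def ta_def)

lemma norm_ta: "norm (ta \<eta> m z) = exp (-2*pi*(of_int m * Im z + of_int (m*(m-1))/2 * Im \<eta>))"
proof -
  have "norm (ta \<eta> m z) = norm ((-1::complex) powi m) * norm (ee (of_int m * z + of_int (m * (m - 1)) / 2 * \<eta>))"
    unfolding ta_def by (rule norm_mult)
  also have "norm ((-1::complex) powi m) = 1" by (simp add: norm_power_int)
  also have "Im (of_int m * z + of_int (m * (m - 1)) / 2 * \<eta>) = of_int m * Im z + of_int (m*(m-1))/2 * Im \<eta>"
    by simp
  ultimately show ?thesis by (simp add: norm_ee)
qed

lemma gauss_summable_nat:
  fixes c d :: real assumes d: "d > 0"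
  shows "summable (\<lambda>p::nat. exp (c * p - d * p^2))"
proof -
  define N where "N = nat \<lceil>(\<bar>c\<bar>+1)/d\<rceil>"
  have g: "summable (\<lambda>p::nat. exp (-1::real) ^ p)"
  proof -
    have "exp (-1::real) < exp 0" by (subst exp_less_cancel_iff) simp
    then have "norm (exp (-1::real)) < 1" by simp
    then show ?thesis by (rule summable_geometric)
  qed
  have b: "norm (exp (c * real p - d * (real p)^2)) \<le> exp (-1::real) ^ p" if "p \<ge> N" for p
  proof -
    from that have "real p \<ge> (\<bar>c\<bar>+1)/d" unfolding N_def by linarith
    then have "d * p \<ge> \<bar>c\<bar> + 1" using d by (simp add: field_simps)
    then have "d * p * p \<ge> (\<bar>c\<bar> + 1) * p" by (rule mult_right_mono) simp
    moreover have "c * p \<le> \<bar>c\<bar> * p" by (rule mult_right_mono) auto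
    ultimately have "c * real p - d * (real p)^2 \<le> - real p"
      by (simp add: power2_eq_square algebra_simps)
    then show ?thesis
      by (simp add: exp_of_nat_mult[symmetric])
  qed
  show ?thesis by (rule summable_comparison_test'[OF g b]) 
qed

lemma summable_on_int_from_nat:
  fixes g :: "nat \<Rightarrow> real"
  assumes "summable g" "\<And>p. g p \<ge> 0"
  shows "(\<lambda>m::int. g (nat \<bar>m\<bar>)) summable_on UNIV"
proof -
  have sg: "g summable_on UNIV"
    using assms by (intro norm_summable_imp_summable_on) auto
  have sg1: "(\<lambda>p. g (Suc p)) summable_on UNIV"
    using assms by (intro norm_summable_imp_summable_on) (auto simp: summable_Suc_iff)
  have U: "(UNIV::int set) = range int \<union> range (\<lambda>p. - int p - 1)"
  proof (intro set_eqI iffI)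
    fix m :: int
    show "m \<in> range int \<union> range (\<lambda>p. - int p - 1)"
    proof (cases "m \<ge> 0")
      case True
      then have "m = int (nat m)" by simp
      then show ?thesis by blast
    next
      case False
      then have "m = - int (nat (-m-1)) - 1" by simp
      then show ?thesis by blast
    qed
  qed auto
  have "(\<lambda>m::int. g (nat \<bar>m\<bar>)) summable_on range int"
    by (subst summable_on_reindex) (auto simp: o_def sg)
  moreover have "(\<lambda>m::int. g (nat \<bar>m\<bar>)) summable_on range (\<lambda>p. - int p - 1)"
  proof (subst summable_on_reindex)
    show "inj_on (\<lambda>p. - int p - 1) UNIV" by (auto simp: inj_on_def)
    have "(\<lambda>p. g (nat \<bar>- int p - 1\<bar>)) = (\<lambda>p. g (Suc p))"
      by (auto simp: nat_add_distrib)
    then show "((\<lambda>m. g (nat \<bar>m\<bar>)) \<circ> (\<lambda>p. - int p - 1)) summable_on UNIV"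
      using sg1 by (simp add: o_def)
  qed
  ultimately show ?thesis
    by (subst U, intro summable_on_Un_disjoint) auto
qed

lemma gauss_summable_int:
  fixes c d :: real assumes d: "d > 0"
  shows "(\<lambda>m::int. exp (c * \<bar>m\<bar> - d * m^2)) summable_on UNIV"
proof -
  have "(\<lambda>m::int. exp (c * real (nat \<bar>m\<bar>) - d * (real (nat \<bar>m\<bar>))^2)) summable_on UNIV"
    by (rule summable_on_int_from_nat[OF gauss_summable_nat[OF d]]) auto
  moreover have "(\<lambda>m::int. exp (c * real (nat \<bar>m\<bar>) - d * (real (nat \<bar>m\<bar>))^2)) =
      (\<lambda>m::int. exp (c * \<bar>m\<bar> - d * m^2))"
    by (auto simp: fun_eq_iff)
  ultimately show ?thesis by simp
qed

lemma m1_powi_diff1: "(-1::complex) powi (m - 1) = - ((-1) powi m)"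
  by (simp add: power_int_diff)

lemma m1_powi_sq: "(-1::complex) powi m * (-1) powi m = 1"
  by (simp add: power_int_mult_distrib[symmetric])

lemma m1_powi_1minus: "(-1::complex) powi (1 - m) = - ((-1) powi m)"
proof -
  have "(-1::complex) powi (1 - m) = - 1 / (-1) powi m" by (simp add: power_int_diff)
  also have "\<dots> = - ((-1) powi m)" using m1_powi_sq[of m]
    by (metis divide_minus_left nonzero_divide_eq_eq one_neq_zero mult_eq_0_iff)
  finally show ?thesis .
qed

lemma norm_ta_le:
  assumes "Im \<eta> > 0" "\<bar>Im z\<bar> \<le> R"
  shows "norm (ta \<eta> m z) \<le> exp ((2*pi*R + pi*Im \<eta>) * \<bar>of_int m\<bar> - pi*Im \<eta> * (of_int m)^2)"
proof -
  define y where "y = Im z"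
  define t where "t = Im \<eta>"
  have ht: "t > 0" using assms by (simp add: t_def)
  have h1: "- (of_int m * y) \<le> R * \<bar>of_int m\<bar>"
  proof -
    have "\<bar>of_int m * y\<bar> \<le> \<bar>of_int m\<bar> * R"
      unfolding abs_mult by (rule mult_left_mono) (use assms in \<open>auto simp: y_def\<close>)
    then show ?thesis by (simp add: mult.commute)
  qed
  have h2: "t * of_int m \<le> t * \<bar>of_int m\<bar>"
    using assms by (intro mult_left_mono) (auto simp: t_def)
  have "-2*pi*(of_int m * y + of_int (m*(m-1))/2 * t)
        = 2*pi*(- (of_int m * y)) + pi * (t * of_int m) - pi*t*(of_int m)^2"
    by (simp add: field_simps power2_eq_square)
  also have "\<dots> \<le> 2*pi*(R * \<bar>of_int m\<bar>) + pi * (t * \<bar>of_int m\<bar>) - pi*t*(of_int m)^2"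
    using h1 h2 ht by (intro diff_right_mono add_mono mult_left_mono) auto
  also have "\<dots> = (2*pi*R + pi*t) * \<bar>of_int m\<bar> - pi*t * (of_int m)^2"
    by (simp add: algebra_simps)
  finally show ?thesis unfolding norm_ta y_def t_def by simp
qed

lemma ta_holo[holomorphic_intros]: "ta \<eta> m holomorphic_on A"
  unfolding ta_def ee_def by (intro holomorphic_intros)

lemma theta_holo_ball:
  assumes "Im \<eta> > 0"
  shows "theta \<eta> holomorphic_on ball w 1"
proof -
  define R where "R = \<bar>Im w\<bar> + 1"
  define M where "M = (\<lambda>m::int. exp ((2*pi*R + pi*Im \<eta>) * \<bar>of_int m\<bar> - pi*Im \<eta> * (of_int m)^2))"
  have Ms: "M summable_on UNIV" unfolding M_def
    by (rule gauss_summable_int) (use assms in simp)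
  have le: "norm (ta \<eta> m z) \<le> M m" if "m \<in> UNIV" "z \<in> cball w 1" for m z
  proof -
    have "\<bar>Im z - Im w\<bar> \<le> 1"
      using that abs_Im_le_cmod[of "z - w"] by (simp add: dist_norm norm_minus_commute)
    then have "\<bar>Im z\<bar> \<le> R" unfolding R_def by linarith
    then show ?thesis unfolding M_def by (rule norm_ta_le[OF assms])
  qed
  have ul: "uniform_limit (cball w 1) (\<lambda>X y. \<Sum>x\<in>X. ta \<eta> x y) (\<lambda>y. \<Sum>\<^sub>\<infinity>x\<in>UNIV. ta \<eta> x y) (finite_subsets_at_top UNIV)"
    by (rule Weierstrass_m_test_general[OF le Ms])
  have ev: "\<forall>\<^sub>F X in finite_subsets_at_top UNIV. continuous_on (cball w 1) (\<lambda>y. \<Sum>x\<in>X. ta \<eta> x y) \<and> (\<lambda>y. \<Sum>x\<in>X. ta \<eta> x y) holomorphic_on ball w 1"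
    by (intro always_eventually allI conjI holomorphic_on_imp_continuous_on holomorphic_intros)
  have "(\<lambda>y. \<Sum>\<^sub>\<infinity>x\<in>UNIV. ta \<eta> x y) holomorphic_on ball w 1"
    by (rule holomorphic_uniform_limit[OF ev ul]) (auto simp: finite_subsets_at_top_neq_bot)
  then show ?thesis by (simp add: theta_ta[abs_def])
qed

lemma theta_holo:
  assumes "Im \<eta> > 0"
  shows "theta \<eta> holomorphic_on UNIV"
proof -
  have "theta \<eta> analytic_on UNIV"
    unfolding analytic_on_def using theta_holo_ball[OF assms] zero_less_one by blast
  then show ?thesis by (rule analytic_imp_holomorphic)
qed

lemma theta_cont:
  assumes "Im \<eta> > 0"
  shows "continuous_on UNIV (theta \<eta>)"
  using theta_holo[OF assms] holomorphic_on_imp_continuous_on by blast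

lemma ta_plus1: "ta \<eta> m (z + 1) = ta \<eta> m z"
proof -
  have "of_int m * (z + 1) + of_int (m * (m - 1)) / 2 * \<eta> = (of_int m * z + of_int (m * (m - 1)) / 2 * \<eta>) + of_int m"
    by (simp add: algebra_simps)
  then show ?thesis unfolding ta_def by (simp add: ee_add)
qed

lemma theta_plus1: "theta \<eta> (z + 1) = theta \<eta> z"
  unfolding theta_ta ta_plus1 ..

lemma ta_plus_eta: "ta \<eta> (m - 1) (z + \<eta>) = - ee (-z) * ta \<eta> m z"
proof -
  have e: "of_int (m - 1) * (z + \<eta>) + of_int ((m - 1) * (m - 1 - 1)) / 2 * \<eta> = -z + (of_int m * z + of_int (m * (m - 1)) / 2 * \<eta>)"
    by (simp add: field_simps)
  show ?thesis unfolding ta_def e ee_add m1_powi_diff1 by simp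
qed

lemma theta_plus_eta: "theta \<eta> (z + \<eta>) = - ee (-z) * theta \<eta> z"
proof -
  have bij: "bij_betw (\<lambda>m::int. m - 1) UNIV UNIV"
    by (rule bij_betwI[of _ _ _ "\<lambda>m. m + 1"]) auto
  have "theta \<eta> (z + \<eta>) = (\<Sum>\<^sub>\<infinity>m\<in>UNIV. ta \<eta> (m - 1) (z + \<eta>))"
    unfolding theta_ta by (rule infsum_reindex_bij_betw[OF bij, symmetric])
  also have "\<dots> = (\<Sum>\<^sub>\<infinity>m\<in>UNIV. - ee (-z) * ta \<eta> m z)"
    by (simp add: ta_plus_eta)
  also have "\<dots> = - ee (-z) * theta \<eta> z"
    unfolding theta_ta by (rule infsum_cmult_right')
  finally show ?thesis .
qed

lemma ta_refl0: "ta \<eta> (1 - m) 0 = - ta \<eta> m 0"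
proof -
  have e: "of_int (1 - m) * (0::complex) + of_int ((1 - m) * (1 - m - 1)) / 2 * \<eta> = of_int m * 0 + of_int (m * (m - 1)) / 2 * \<eta>"
    by (simp add: algebra_simps)
  show ?thesis unfolding ta_def e m1_powi_1minus by simp
qed

lemma theta_zero: "theta \<eta> 0 = 0"
proof -
  have bij: "bij_betw (\<lambda>m::int. 1 - m) UNIV UNIV"
    by (rule bij_betwI[of _ _ _ "\<lambda>m. 1 - m"]) auto
  have "theta \<eta> 0 = (\<Sum>\<^sub>\<infinity>m\<in>UNIV. ta \<eta> (1 - m) 0)"
    unfolding theta_ta by (rule infsum_reindex_bij_betw[OF bij, symmetric])
  also have "\<dots> = (\<Sum>\<^sub>\<infinity>m\<in>UNIV. - ta \<eta> m 0)"
    by (simp add: ta_refl0)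
  also have "\<dots> = - theta \<eta> 0"
    unfolding theta_ta by (rule infsum_uminus)
  finally show ?thesis by simp
qed

definition pprod :: "(nat \<Rightarrow> complex \<Rightarrow> complex) \<Rightarrow> complex \<Rightarrow> complex" where
  "pprod f z = lim (\<lambda>N. \<Prod>k<N. f k z)"

definition pgood :: "(nat \<Rightarrow> complex \<Rightarrow> complex) \<Rightarrow> bool" where
  "pgood f \<longleftrightarrow> (\<forall>k. f k holomorphic_on UNIV) \<and>
     (\<forall>w. \<exists>M. summable M \<and> (\<forall>k z. z \<in> cball w 1 \<longrightarrow> norm (f k z - 1) \<le> M k))"

lemma pgood_Suc: "pgood f \<Longrightarrow> pgood (\<lambda>k. f (Suc k))"
  unfolding pgood_def
proof (intro conjI allI; elim conjE)
  fix w
  assume "\<forall>w. \<exists>M. summable M \<and> (\<forall>k z. z \<in> cball w 1 \<longrightarrow> norm (f k z - 1) \<le> M k)"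
  then obtain M where "summable M" "\<forall>k z. z \<in> cball w 1 \<longrightarrow> norm (f k z - 1) \<le> M k" by blast
  then show "\<exists>M. summable M \<and> (\<forall>k z. z \<in> cball w 1 \<longrightarrow> norm (f (Suc k) z - 1) \<le> M k)"
    by (intro exI[of _ "\<lambda>k. M (Suc k)"]) (auto simp: summable_Suc_iff)
qed auto

lemma pgood_uniform:
  assumes "pgood f"
  shows "uniform_limit (cball w 1) (\<lambda>N z. \<Prod>k<N. f k z) (pprod f) sequentially"
proof -
  from assms obtain M where M: "summable M" "\<And>k z. z \<in> cball w 1 \<Longrightarrow> norm (f k z - 1) \<le> M k"
    unfolding pgood_def by blast
  have cont: "\<And>k. continuous_on (cball w 1) (f k)"
    using assms unfolding pgood_def by (meson holomorphic_on_imp_continuous_on holomorphic_on_subset subset_UNIV)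
  have "uniform_limit (cball w 1) (\<lambda>N z. \<Sum>k<N. norm (f k z - 1)) (\<lambda>z. \<Sum>k. norm (f k z - 1)) sequentially"
    by (rule Weierstrass_m_test) (use M in auto)
  then have "uniformly_convergent_on (cball w 1) (\<lambda>N z. \<Sum>k<N. norm (f k z - 1))"
    unfolding uniformly_convergent_on_def by blast
  then have "uniformly_convergent_on (cball w 1) (\<lambda>N z. \<Prod>k<N. f k z)"
    by (intro uniformly_convergent_on_prod' cont) auto
  then show ?thesis
    unfolding uniformly_convergent_uniform_limit_iff pprod_def .
qed

lemma pgood_LIMSEQ:
  assumes "pgood f"
  shows "(\<lambda>N. \<Prod>k<N. f k z) \<longlonglongrightarrow> pprod f z"
  using tendsto_uniform_limitI[OF pgood_uniform[OF assms, of z], of z] by simp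

lemma pgood_holo:
  assumes "pgood f"
  shows "pprod f holomorphic_on UNIV"
proof -
  have "pprod f holomorphic_on ball w 1" for w
  proof (rule holomorphic_uniform_limit[OF _ pgood_uniform[OF assms]])
    have "(\<lambda>z. \<Prod>k<N. f k z) holomorphic_on UNIV" for N
      using assms unfolding pgood_def by (intro holomorphic_on_prod) auto
    then show "\<forall>\<^sub>F N in sequentially. continuous_on (cball w 1) (\<lambda>z. \<Prod>k<N. f k z) \<and> (\<lambda>z. \<Prod>k<N. f k z) holomorphic_on ball w 1"
      by (intro always_eventually allI conjI)
         (meson holomorphic_on_imp_continuous_on holomorphic_on_subset subset_UNIV)+
  qed auto
  then have "pprod f analytic_on UNIV"
    unfolding analytic_on_def using zero_less_one by blast
  then show ?thesis by (rule analytic_imp_holomorphic)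
qed

lemma pgood_nonzero:
  assumes "pgood f" "\<And>k. f k z \<noteq> 0"
  shows "pprod f z \<noteq> 0"
proof -
  from assms(1) obtain M where M: "summable M" "\<And>k y. y \<in> cball z 1 \<Longrightarrow> norm (f k y - 1) \<le> M k"
    unfolding pgood_def by blast
  have "summable (\<lambda>k. norm (f k z - 1))"
    by (rule summable_comparison_test[OF _ M(1)]) (use M(2) in auto)
  then have "abs_convergent_prod (\<lambda>k. f k z)"
    by (rule summable_imp_abs_convergent_prod)
  then have cp: "convergent_prod (\<lambda>k. f k z)"
    by (rule abs_convergent_prod_imp_convergent_prod)
  have "prodinf (\<lambda>k. f k z) = lim (\<lambda>n. \<Prod>i<n. f i z)"
    by (rule prodinf_eq_lim'[OF cp]) (use assms in auto)
  moreover have "prodinf (\<lambda>k. f k z) \<noteq> 0"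
    by (rule prodinf_nonzero[OF cp]) (use assms in auto)
  ultimately show ?thesis unfolding pprod_def by simp
qed

lemma prod_shift_LIMSEQ:
  fixes g :: "nat \<Rightarrow> complex"
  assumes "(\<lambda>N. \<Prod>k<N. g (Suc k)) \<longlonglongrightarrow> L"
  shows "(\<lambda>N. \<Prod>k<N. g k) \<longlonglongrightarrow> g 0 * L"
proof -
  have "(\<lambda>N. g 0 * (\<Prod>k<N. g (Suc k))) \<longlonglongrightarrow> g 0 * L"
    by (intro tendsto_intros assms)
  moreover have "(\<lambda>N. g 0 * (\<Prod>k<N. g (Suc k))) = (\<lambda>N. \<Prod>k<Suc N. g k)"
    by (rule ext) (rule prod.lessThan_Suc_shift[symmetric])
  ultimately have "(\<lambda>N. \<Prod>k<Suc N. g k) \<longlonglongrightarrow> g 0 * L" by simp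
  then show ?thesis by (rule LIMSEQ_imp_Suc)
qed

lemma pgood_shift:
  assumes "pgood f"
  shows "pprod f z = f 0 z * pprod (\<lambda>k. f (Suc k)) z"
proof -
  have "(\<lambda>N. \<Prod>k<N. f k z) \<longlonglongrightarrow> f 0 z * pprod (\<lambda>k. f (Suc k)) z"
    using prod_shift_LIMSEQ[OF pgood_LIMSEQ[OF pgood_Suc[OF assms]]] by simp
  then show ?thesis using pgood_LIMSEQ[OF assms] LIMSEQ_unique by blast
qed

definition uf :: "complex \<Rightarrow> nat \<Rightarrow> complex \<Rightarrow> complex" where
  "uf \<eta> k z = 1 - ee (z + of_nat k * \<eta>)"
definition vf :: "complex \<Rightarrow> nat \<Rightarrow> complex \<Rightarrow> complex" where
  "vf \<eta> k z = 1 - ee (of_nat (Suc k) * \<eta> - z)"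
definition lat :: "complex \<Rightarrow> complex set" where
  "lat \<eta> = {of_int a + of_int b * \<eta> | a b. True}"
definition FF :: "complex \<Rightarrow> complex \<Rightarrow> complex" where
  "FF \<eta> z = pprod (uf \<eta>) z * pprod (vf \<eta>) z"
definition RR :: "complex \<Rightarrow> complex \<Rightarrow> complex" where
  "RR \<eta> z = pprod (\<lambda>k. uf \<eta> (Suc k)) z * pprod (vf \<eta>) z"

lemma geom_q:
  assumes "Im \<eta> > 0"
  shows "summable (\<lambda>k. C * exp (-2*pi*Im \<eta>) ^ k)" "exp (-2*pi*Im \<eta>) < 1"
proof -
  have "exp (-2*pi*Im \<eta>) < exp 0" by (subst exp_less_cancel_iff) (use assms in simp)
  then show lt: "exp (-2*pi*Im \<eta>) < 1" by simp
  then have "norm (exp (-2*pi*Im \<eta>)) < 1" by simp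
  then have "summable (\<lambda>k. exp (-2*pi*Im \<eta>) ^ k)" by (rule summable_geometric)
  then show "summable (\<lambda>k. C * exp (-2*pi*Im \<eta>) ^ k)" by (rule summable_mult)
qed

lemma Im_cball: "z \<in> cball w 1 \<Longrightarrow> \<bar>Im z\<bar> \<le> \<bar>Im w\<bar> + 1"
proof -
  assume "z \<in> cball w 1"
  then have "\<bar>Im z - Im w\<bar> \<le> 1"
    using abs_Im_le_cmod[of "z - w"] by (simp add: dist_norm norm_minus_commute)
  then show ?thesis by linarith
qed

lemma pgood_uf:
  assumes "Im \<eta> > 0"
  shows "pgood (uf \<eta>)"
  unfolding pgood_def
proof (intro conjI allI)
  fix k show "uf \<eta> k holomorphic_on UNIV" unfolding uf_def ee_def by (intro holomorphic_intros)
next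
  fix w
  define R where "R = \<bar>Im w\<bar> + 1"
  define q where "q = exp (-2*pi*Im \<eta>)"
  have q0: "q \<ge> 0" unfolding q_def by simp
  have "norm (uf \<eta> k z - 1) \<le> exp (2*pi*R) * q ^ k" if "z \<in> cball w 1" for k z
  proof -
    have "norm (uf \<eta> k z - 1) = exp (-2*pi*(Im z + real k * Im \<eta>))"
      by (simp add: uf_def norm_ee)
    also have "\<dots> = exp (-2*pi*Im z) * exp (real k * (-2*pi*Im \<eta>))"
      by (simp add: algebra_simps exp_add[symmetric])
    also have "\<dots> = exp (-2*pi*Im z) * q ^ k"
      by (simp only: q_def exp_of_nat_mult)
    also have "\<dots> \<le> exp (2*pi*R) * q ^ k"
    proof (rule mult_right_mono)
      have "- Im z \<le> R" using Im_cball[OF that] by (auto simp: R_def)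
      then have "2*pi*(- Im z) \<le> 2*pi*R" by (intro mult_left_mono) auto
      then show "exp (-2*pi*Im z) \<le> exp (2*pi*R)" by simp
    qed (use q0 in auto)
    finally show ?thesis .
  qed
  moreover have "summable (\<lambda>k. exp (2*pi*R) * q ^ k)"
    unfolding q_def by (rule geom_q[OF assms])
  ultimately show "\<exists>M. summable M \<and> (\<forall>k z. z \<in> cball w 1 \<longrightarrow> norm (uf \<eta> k z - 1) \<le> M k)"
    by blast
qed

lemma pgood_vf:
  assumes "Im \<eta> > 0"
  shows "pgood (vf \<eta>)"
  unfolding pgood_def
proof (intro conjI allI)
  fix k show "vf \<eta> k holomorphic_on UNIV" unfolding vf_def ee_def by (intro holomorphic_intros)
next
  fix w
  define R where "R = \<bar>Im w\<bar> + 1"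
  define q where "q = exp (-2*pi*Im \<eta>)"
  have q0: "q \<ge> 0" "q \<le> 1" unfolding q_def using geom_q(2)[OF assms] by auto
  have "norm (vf \<eta> k z - 1) \<le> exp (2*pi*R) * q ^ k" if "z \<in> cball w 1" for k z
  proof -
    have "norm (vf \<eta> k z - 1) = exp (-2*pi*(real (Suc k) * Im \<eta> - Im z))"
      by (simp add: vf_def norm_ee)
    also have "\<dots> = exp (2*pi*Im z) * exp (real (Suc k) * (-2*pi*Im \<eta>))"
      by (simp add: algebra_simps exp_add[symmetric])
    also have "\<dots> = exp (2*pi*Im z) * q ^ Suc k"
      by (simp only: q_def exp_of_nat_mult)
    also have "\<dots> \<le> exp (2*pi*R) * q ^ k"
    proof (rule mult_mono)
      have "Im z \<le> R" using Im_cball[OF that] by (auto simp: R_def)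
      then have "2*pi*Im z \<le> 2*pi*R" by (intro mult_left_mono) auto
      then show "exp (2*pi*Im z) \<le> exp (2*pi*R)" by simp
      show "q ^ Suc k \<le> q ^ k" using q0 by (simp add: mult_left_le_one_le)
    qed (use q0 in auto)
    finally show ?thesis .
  qed
  moreover have "summable (\<lambda>k. exp (2*pi*R) * q ^ k)"
    unfolding q_def by (rule geom_q[OF assms])
  ultimately show "\<exists>M. summable M \<and> (\<forall>k z. z \<in> cball w 1 \<longrightarrow> norm (vf \<eta> k z - 1) \<le> M k)"
    by blast
qed

lemma FF_holo: "Im \<eta> > 0 \<Longrightarrow> FF \<eta> holomorphic_on UNIV"
  unfolding FF_def[abs_def]
  by (intro holomorphic_intros pgood_holo pgood_uf pgood_vf)

lemma RR_holo: "Im \<eta> > 0 \<Longrightarrow> RR \<eta> holomorphic_on UNIV"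
  unfolding RR_def[abs_def]
  by (intro holomorphic_intros pgood_holo pgood_uf pgood_vf pgood_Suc)

lemma FF_eq: "Im \<eta> > 0 \<Longrightarrow> FF \<eta> z = (1 - ee z) * RR \<eta> z"
  unfolding FF_def RR_def pgood_shift[OF pgood_uf, of \<eta> z]
  by (simp add: uf_def)

lemma ee_Im_pos_ne1:
  assumes "Im w \<noteq> 0" shows "ee w \<noteq> 1"
proof
  assume "ee w = 1"
  then obtain m::int where "w = of_int m" using ee_eq_1_iff by blast
  then show False using assms by simp
qed

lemma RR0: "Im \<eta> > 0 \<Longrightarrow> RR \<eta> 0 \<noteq> 0"
  unfolding RR_def
proof (intro no_zero_divisors pgood_nonzero pgood_uf pgood_vf pgood_Suc)
  assume a: "Im \<eta> > 0"
  fix k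
  have "ee (of_nat (Suc k) * \<eta>) \<noteq> 1"
    by (rule ee_Im_pos_ne1) (use a in simp)
  then show "uf \<eta> (Suc k) 0 \<noteq> 0" "vf \<eta> k 0 \<noteq> 0"
    by (auto simp: uf_def vf_def)
qed

lemma FF_nonzero:
  assumes "Im \<eta> > 0" "z \<notin> lat \<eta>"
  shows "FF \<eta> z \<noteq> 0"
  unfolding FF_def
proof (intro no_zero_divisors pgood_nonzero pgood_uf pgood_vf assms(1))
  fix k
  show "uf \<eta> k z \<noteq> 0"
  proof
    assume "uf \<eta> k z = 0"
    then have "ee (z + of_nat k * \<eta>) = 1" by (simp add: uf_def)
    then obtain m::int where "z + of_nat k * \<eta> = of_int m" using ee_eq_1_iff by blast
    then have "z = of_int m + of_int (- int k) * \<eta>" by (simp add: algebra_simps)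
    then show False using assms(2) unfolding lat_def by blast
  qed
  show "vf \<eta> k z \<noteq> 0"
  proof
    assume "vf \<eta> k z = 0"
    then have "ee (of_nat (Suc k) * \<eta> - z) = 1" by (simp add: vf_def)
    then obtain m::int where "of_nat (Suc k) * \<eta> - z = of_int m" using ee_eq_1_iff by blast
    then have "z = of_int (-m) + of_int (int (Suc k)) * \<eta>" by (simp add: algebra_simps)
    then show False using assms(2) unfolding lat_def by blast
  qed
qed

lemma ee_plus_int: "ee (x + of_int m) = ee x"
  by (simp add: ee_add)

lemma FF_plus1: "FF \<eta> (z + 1) = FF \<eta> z"
proof -
  have "uf \<eta> k (z + 1) = uf \<eta> k z" for k
  proof -
    have "z + 1 + of_nat k * \<eta> = (z + of_nat k * \<eta>) + of_int 1" by simp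
    then show ?thesis unfolding uf_def by (metis ee_plus_int)
  qed
  moreover have "vf \<eta> k (z + 1) = vf \<eta> k z" for k
  proof -
    have "of_nat (Suc k) * \<eta> - (z + 1) = (of_nat (Suc k) * \<eta> - z) + of_int (-1)" by simp
    then show ?thesis unfolding vf_def by (metis ee_plus_int)
  qed
  ultimately show ?thesis unfolding FF_def pprod_def by simp
qed

lemma FF_plus_eta:
  assumes "Im \<eta> > 0"
  shows "FF \<eta> (z + \<eta>) = - ee (-z) * FF \<eta> z"
proof -
  have U: "pprod (uf \<eta>) (z + \<eta>) = pprod (\<lambda>k. uf \<eta> (Suc k)) z"
  proof -
    have "uf \<eta> k (z + \<eta>) = uf \<eta> (Suc k) z" for k
      unfolding uf_def by (simp add: algebra_simps)
    then show ?thesis unfolding pprod_def by simp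
  qed
  have V: "pprod (vf \<eta>) (z + \<eta>) = (1 - ee (-z)) * pprod (vf \<eta>) z"
  proof -
    have "vf \<eta> (Suc k) (z + \<eta>) = vf \<eta> k z" for k
      unfolding vf_def by (simp add: algebra_simps)
    then have "(\<lambda>N. \<Prod>k<N. vf \<eta> (Suc k) (z + \<eta>)) \<longlonglongrightarrow> pprod (vf \<eta>) z"
      using pgood_LIMSEQ[OF pgood_vf[OF assms]] by simp
    then have "(\<lambda>N. \<Prod>k<N. vf \<eta> k (z + \<eta>)) \<longlonglongrightarrow> vf \<eta> 0 (z + \<eta>) * pprod (vf \<eta>) z"
      by (rule prod_shift_LIMSEQ)
    moreover have "vf \<eta> 0 (z + \<eta>) = 1 - ee (-z)" unfolding vf_def by simp
    ultimately show ?thesis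
      using pgood_LIMSEQ[OF pgood_vf[OF assms]] LIMSEQ_unique by metis
  qed
  have e: "1 - ee (-z) = - ee (-z) * (1 - ee z)"
    by (simp add: ee_neg algebra_simps)
  show ?thesis
    unfolding FF_def U V pgood_shift[OF pgood_uf[OF assms], of z] e
    by (simp add: uf_def)
qed

lemma lat_add: "x \<in> lat \<eta> \<Longrightarrow> y \<in> lat \<eta> \<Longrightarrow> x + y \<in> lat \<eta>"
  unfolding lat_def
proof clarify
  fix a b c d :: int
  have "of_int a + of_int b * \<eta> + (of_int c + of_int d * \<eta>) = of_int (a + c) + of_int (b + d) * \<eta>"
    by (simp add: algebra_simps)
  then show "\<exists>a' b'. of_int a + of_int b * \<eta> + (of_int c + of_int d * \<eta>) = of_int a' + of_int b' * \<eta> \<and> True"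
    by blast
qed

lemma lat_neg: "x \<in> lat \<eta> \<Longrightarrow> - x \<in> lat \<eta>"
  unfolding lat_def
proof clarify
  fix a b :: int
  have "- (of_int a + of_int b * \<eta>) = of_int (-a) + of_int (-b) * \<eta>"
    by (simp add: algebra_simps)
  then show "\<exists>a' b'. - (of_int a + of_int b * \<eta>) = of_int a' + of_int b' * \<eta> \<and> True"
    by blast
qed

lemma lat_zero: "0 \<in> lat \<eta>"
  unfolding lat_def by (rule CollectI, rule exI[of _ 0], rule exI[of _ 0]) simp

lemma lat_shift_iff: "l \<in> lat \<eta> \<Longrightarrow> (z + l \<in> lat \<eta>) = (z \<in> lat \<eta>)"
  by (metis add_diff_cancel_right' diff_conv_add_uminus lat_add lat_neg)

lemma periodic_int:
  assumes "\<And>z. f (z + p) = f z"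
  shows "f (z + of_int a * p) = f (z :: complex)"
proof (induct a rule: int_induct[where k=0])
  case base then show ?case by simp
next
  case (step1 i)
  have "f (z + of_int (i + 1) * p) = f ((z + of_int i * p) + p)"
    by (simp add: algebra_simps)
  also have "\<dots> = f (z + of_int i * p)" by (rule assms)
  finally show ?case using step1 by simp
next
  case (step2 i)
  have "f (z + of_int i * p) = f ((z + of_int (i - 1) * p) + p)"
    by (simp add: algebra_simps)
  also have "\<dots> = f (z + of_int (i - 1) * p)" by (rule assms)
  finally show ?case using step2 by simp
qed

definition QQ :: "complex \<Rightarrow> complex \<Rightarrow> complex" where
  "QQ \<eta> z = theta \<eta> z / FF \<eta> z"

lemma QQ_plus1: "QQ \<eta> (z + 1) = QQ \<eta> z"
  unfolding QQ_def theta_plus1 FF_plus1 ..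

lemma QQ_plus_eta: "Im \<eta> > 0 \<Longrightarrow> QQ \<eta> (z + \<eta>) = QQ \<eta> z"
  unfolding QQ_def theta_plus_eta FF_plus_eta
  by (rule mult_divide_mult_cancel_left) simp

lemma QQ_lat:
  assumes "Im \<eta> > 0" "l \<in> lat \<eta>"
  shows "QQ \<eta> (z + l) = QQ \<eta> z"
proof -
  from assms(2) obtain a b :: int where l: "l = of_int a + of_int b * \<eta>"
    unfolding lat_def by blast
  have "QQ \<eta> (z + l) = QQ \<eta> ((z + of_int b * \<eta>) + of_int a * 1)"
    by (simp add: l algebra_simps)
  also have "\<dots> = QQ \<eta> (z + of_int b * \<eta>)"
    by (rule periodic_int) (rule QQ_plus1)
  also have "\<dots> = QQ \<eta> z"
    by (rule periodic_int) (rule QQ_plus_eta[OF assms(1)])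
  finally show ?thesis .
qed

definition LL :: "complex \<Rightarrow> complex" where
  "LL \<eta> = deriv (theta \<eta>) 0 / (-(2*pi*\<i>) * RR \<eta> 0)"

definition HH :: "complex \<Rightarrow> complex \<Rightarrow> complex" where
  "HH \<eta> z = (if z \<in> lat \<eta> then LL \<eta> else QQ \<eta> z)"

lemma HH_lat:
  assumes "Im \<eta> > 0" "l \<in> lat \<eta>"
  shows "HH \<eta> (z + l) = HH \<eta> z"
  unfolding HH_def lat_shift_iff[OF assms(2)] QQ_lat[OF assms] ..

lemma lat_small:
  assumes "Im \<eta> > 0" "z \<in> lat \<eta>" "norm z < min 1 (Im \<eta>)"
  shows "z = 0"
proof -
  from assms(2) obtain a b :: int where z: "z = of_int a + of_int b * \<eta>"
    unfolding lat_def by blast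
  have "\<bar>Im z\<bar> < Im \<eta>" using abs_Im_le_cmod[of z] assms(3) by linarith
  then have "\<bar>of_int b\<bar> * Im \<eta> < 1 * Im \<eta>" using assms(1) by (simp add: z abs_mult)
  then have "\<bar>b\<bar> < 1" using assms(1) by (metis mult_less_cancel_right_pos of_int_1 of_int_abs of_int_less_iff)
  then have b: "b = 0" by simp
  have "\<bar>Re z\<bar> < 1" using abs_Re_le_cmod[of z] assms(3) by linarith
  then have "\<bar>a\<bar> < 1" by (simp add: z b)
  then have "a = 0" by simp
  then show ?thesis using b z by simp
qed

lemma lat_ball_finite:
  assumes "Im \<eta> > 0"
  shows "finite (lat \<eta> \<inter> ball w 1)"
proof -
  define t where "t = Im \<eta>"
  have t: "t > 0" using assms by (simp add: t_def)
  define B where "B = \<lceil>(\<bar>Im w\<bar> + 1) / t\<rceil>"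
  define A where "A = \<lceil>1 + \<bar>Re w\<bar> + of_int B * \<bar>Re \<eta>\<bar>\<rceil>"
  have "lat \<eta> \<inter> ball w 1 \<subseteq> (\<lambda>(a,b). of_int a + of_int b * \<eta>) ` ({-A..A} \<times> {-B..B})"
  proof
    fix z assume "z \<in> lat \<eta> \<inter> ball w 1"
    then obtain a b :: int where z: "z = of_int a + of_int b * \<eta>" and d: "norm (z - w) < 1"
      unfolding lat_def by (auto simp: dist_norm norm_minus_commute)
    have "\<bar>Im z - Im w\<bar> < 1" using abs_Im_le_cmod[of "z - w"] d by simp
    then have "\<bar>of_int b\<bar> * t < \<bar>Im w\<bar> + 1" by (simp add: z t_def abs_mult)
    then have "\<bar>of_int b\<bar> < (\<bar>Im w\<bar> + 1) / t" using t by (simp add: field_simps)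
    then have bB: "\<bar>b\<bar> \<le> B" unfolding B_def by linarith
    then have bB': "\<bar>of_int b\<bar> * \<bar>Re \<eta>\<bar> \<le> of_int B * \<bar>Re \<eta>\<bar>"
      by (intro mult_right_mono) auto
    have "\<bar>Re z - Re w\<bar> < 1" using abs_Re_le_cmod[of "z - w"] d by simp
    then have "\<bar>of_int a + of_int b * Re \<eta> - Re w\<bar> < 1" by (simp add: z)
    moreover have "\<bar>of_int b * Re \<eta>\<bar> = \<bar>of_int b\<bar> * \<bar>Re \<eta>\<bar>" by (rule abs_mult)
    ultimately have "\<bar>of_int a\<bar> < 1 + \<bar>Re w\<bar> + \<bar>of_int b\<bar> * \<bar>Re \<eta>\<bar>"
      by linarith
    then have "\<bar>a\<bar> \<le> A" unfolding A_def using bB' by linarith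
    with bB show "z \<in> (\<lambda>(a,b). of_int a + of_int b * \<eta>) ` ({-A..A} \<times> {-B..B})"
      by (intro image_eqI[of _ _ "(a,b)"]) (auto simp: z)
  qed
  then show ?thesis by (rule finite_subset) auto
qed

lemma theta_deriv0:
  assumes "Im \<eta> > 0"
  shows "((\<lambda>z. theta \<eta> z / z) \<longlongrightarrow> deriv (theta \<eta>) 0) (at 0)"
proof -
  have "theta \<eta> field_differentiable at 0"
    using holomorphic_on_imp_differentiable_at[OF theta_holo[OF assms] open_UNIV] by simp
  then have "(theta \<eta> has_field_derivative deriv (theta \<eta>) 0) (at 0)"
    using DERIV_deriv_iff_field_differentiable by blast
  then show ?thesis unfolding has_field_derivative_iff by (simp add: theta_zero)
qed

lemma ee_deriv0: "((\<lambda>z. (1 - ee z) / z) \<longlongrightarrow> -(2*pi*\<i>)) (at 0)"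
proof -
  have "((\<lambda>z. 1 - ee z) has_field_derivative -(2*pi*\<i>) * ee 0) (at 0)"
    unfolding ee_def by (auto intro!: derivative_eq_intros)
  then show ?thesis unfolding has_field_derivative_iff by simp
qed

lemma QQ_tendsto0:
  assumes "Im \<eta> > 0"
  shows "(QQ \<eta> \<longlongrightarrow> LL \<eta>) (at 0)"
proof -
  have RR: "(RR \<eta> \<longlongrightarrow> RR \<eta> 0) (at 0)"
    using holomorphic_on_imp_continuous_on[OF RR_holo[OF assms]]
    by (simp add: continuous_on_def)
  have "((\<lambda>z. (theta \<eta> z / z) / (((1 - ee z) / z) * RR \<eta> z)) \<longlongrightarrow> LL \<eta>) (at 0)"
    unfolding LL_def
    by (intro tendsto_intros theta_deriv0 ee_deriv0 RR assms) (use RR0[OF assms] in simp)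
  moreover have "\<forall>\<^sub>F z in at 0. (theta \<eta> z / z) / (((1 - ee z) / z) * RR \<eta> z) = QQ \<eta> z"
    unfolding eventually_at_filter
    by (intro always_eventually allI impI) (simp add: QQ_def FF_eq[OF assms])
  ultimately show ?thesis by (rule Lim_transform_eventually)
qed

lemma HH_tendsto0:
  assumes "Im \<eta> > 0"
  shows "(HH \<eta> \<longlongrightarrow> LL \<eta>) (at 0)"
proof -
  have "\<forall>\<^sub>F z in at 0. QQ \<eta> z = HH \<eta> z"
    unfolding eventually_at
  proof (intro exI[of _ "min 1 (Im \<eta>)"] conjI ballI impI)
    show "min 1 (Im \<eta>) > 0" using assms by simp
    fix z :: complex assume "z \<in> UNIV" "z \<noteq> 0 \<and> dist z 0 < min 1 (Im \<eta>)"
    then have "z \<notin> lat \<eta>" using lat_small[OF assms] by auto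
    then show "QQ \<eta> z = HH \<eta> z" by (simp add: HH_def)
  qed
  then show ?thesis by (rule Lim_transform_eventually[OF QQ_tendsto0[OF assms]])
qed

lemma HH_tendsto_lat:
  assumes "Im \<eta> > 0" "l \<in> lat \<eta>"
  shows "(HH \<eta> \<longlongrightarrow> HH \<eta> l) (at l)"
proof -
  have "HH \<eta> l = LL \<eta>" using assms(2) by (simp add: HH_def)
  moreover have "((\<lambda>h. HH \<eta> (l + h)) \<longlongrightarrow> LL \<eta>) (at 0)"
    using HH_tendsto0[OF assms(1)] HH_lat[OF assms] by (simp add: add.commute)
  ultimately show ?thesis using LIM_offset_zero_cancel by metis
qed

lemma HH_holo:
  assumes "Im \<eta> > 0"
  shows "HH \<eta> holomorphic_on UNIV"
proof -
  have "HH \<eta> holomorphic_on ball w 1" for w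
  proof (rule no_isolated_singularity'[where K = "lat \<eta> \<inter> ball w 1"])
    show "finite (lat \<eta> \<inter> ball w 1)" by (rule lat_ball_finite[OF assms])
    show "(HH \<eta> \<longlongrightarrow> HH \<eta> z) (at z within ball w 1)" if "z \<in> lat \<eta> \<inter> ball w 1" for z
      using HH_tendsto_lat[OF assms, of z] that by (auto intro: tendsto_within_subset)
    have "(\<lambda>z. theta \<eta> z / FF \<eta> z) holomorphic_on (ball w 1 - lat \<eta> \<inter> ball w 1)"
      by (intro holomorphic_on_divide holomorphic_on_subset[OF theta_holo[OF assms]]
          holomorphic_on_subset[OF FF_holo[OF assms]] ballI FF_nonzero[OF assms]) auto
    then show "HH \<eta> holomorphic_on (ball w 1 - lat \<eta> \<inter> ball w 1)"
      by (rule holomorphic_transform) (auto simp: HH_def QQ_def)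
  qed auto
  then have "HH \<eta> analytic_on UNIV"
    unfolding analytic_on_def using zero_less_one by blast
  then show ?thesis by (rule analytic_imp_holomorphic)
qed

lemma HH_bounded:
  assumes "Im \<eta> > 0"
  shows "bounded (range (HH \<eta>))"
proof -
  define P where "P = (\<lambda>p::real\<times>real. of_real (fst p) + of_real (snd p) * \<eta>) ` ({0..1} \<times> {0..1})"
  have "compact P" unfolding P_def
    by (intro compact_continuous_image compact_Times compact_Icc continuous_intros)
  moreover have "continuous_on P (HH \<eta>)"
    using holomorphic_on_imp_continuous_on[OF HH_holo[OF assms]] continuous_on_subset by blast
  ultimately have "compact (HH \<eta> ` P)" by (metis compact_continuous_image)
  then have b: "bounded (HH \<eta> ` P)" by (rule compact_imp_bounded)
  have "range (HH \<eta>) \<subseteq> HH \<eta> ` P"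
  proof clarify
    fix z
    define u where "u = Im z / Im \<eta>"
    define s where "s = Re z - u * Re \<eta>"
    have zsu: "z = of_real s + of_real u * \<eta>"
      using assms by (simp add: complex_eq_iff s_def u_def)
    define a where "a = \<lfloor>s\<rfloor>"
    define b where "b = \<lfloor>u\<rfloor>"
    define p where "p = (s - of_int a, u - of_int b)"
    have pP: "p \<in> {0..1} \<times> {0..1}" unfolding p_def a_def b_def by auto (linarith+)
    have l: "of_int a + of_int b * \<eta> \<in> lat \<eta>" unfolding lat_def by blast
    have "z = (of_real (fst p) + of_real (snd p) * \<eta>) + (of_int a + of_int b * \<eta>)"
      unfolding zsu p_def by (simp add: algebra_simps)
    then have "HH \<eta> z = HH \<eta> (of_real (fst p) + of_real (snd p) * \<eta>)"
      using HH_lat[OF assms l] by simp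
    then show "HH \<eta> z \<in> HH \<eta> ` P" unfolding P_def using pP by blast
  qed
  then show ?thesis using b bounded_subset by blast
qed

lemma theta_eq_LL_FF:
  assumes "Im \<eta> > 0" "z \<notin> lat \<eta>"
  shows "theta \<eta> z = LL \<eta> * FF \<eta> z"
proof -
  have "HH \<eta> constant_on UNIV"
    by (rule Liouville_theorem[OF HH_holo[OF assms(1)] HH_bounded[OF assms(1)]])
  then obtain c where c: "\<And>x. HH \<eta> x = c" unfolding constant_on_def by blast
  have "c = LL \<eta>" using c[of 0] lat_zero by (simp add: HH_def)
  then have "QQ \<eta> z = LL \<eta>" using c[of z] assms(2) by (simp add: HH_def)
  then show ?thesis using FF_nonzero[OF assms] by (simp add: QQ_def field_simps)
qed

lemma ta_summable:
  assumes "Im \<eta> > 0"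
  shows "(\<lambda>m. ta \<eta> m z) summable_on UNIV"
proof -
  define M where "M = (\<lambda>m::int. exp ((2*pi*\<bar>Im z\<bar> + pi*Im \<eta>) * \<bar>of_int m\<bar> - pi*Im \<eta> * (of_int m)^2))"
  have Ms: "M summable_on UNIV" unfolding M_def
    by (rule gauss_summable_int) (use assms in simp)
  have Ms': "(\<lambda>m. norm (M m)) summable_on UNIV" using Ms by (simp add: M_def)
  have "(\<lambda>m. norm (ta \<eta> m z)) summable_on UNIV"
  proof (rule Infinite_Sum.abs_summable_on_comparison_test[OF Ms'])
    fix m :: int
    have "norm (ta \<eta> m z) \<le> M m" unfolding M_def by (rule norm_ta_le[OF assms]) simp
    then show "norm (ta \<eta> m z) \<le> norm (M m)" by (simp add: M_def)
  qed
  then show ?thesis by (rule Infinite_Sum.abs_summable_summable)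
qed

lemma infsum_finite_sum:
  fixes f :: "'j \<Rightarrow> 'a \<Rightarrow> complex"
  assumes "finite J" "\<And>j. j \<in> J \<Longrightarrow> f j summable_on A"
  shows "(\<lambda>x. \<Sum>j\<in>J. f j x) summable_on A \<and> infsum (\<lambda>x. \<Sum>j\<in>J. f j x) A = (\<Sum>j\<in>J. infsum (f j) A)"
  using assms
proof (induct J rule: finite_induct)
  case empty then show ?case by simp
next
  case (insert j J)
  then have IH: "(\<lambda>x. \<Sum>j\<in>J. f j x) summable_on A" "infsum (\<lambda>x. \<Sum>j\<in>J. f j x) A = (\<Sum>j\<in>J. infsum (f j) A)"
    by auto
  have fj: "f j summable_on A" using insert by auto
  have "(\<lambda>x. f j x + (\<Sum>j\<in>J. f j x)) summable_on A" by (rule summable_on_add[OF fj IH(1)])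
  moreover have "infsum (\<lambda>x. f j x + (\<Sum>j\<in>J. f j x)) A = infsum (f j) A + (\<Sum>j\<in>J. infsum (f j) A)"
    using infsum_add[OF fj IH(1)] IH(2) by simp
  ultimately show ?case using insert by simp
qed

lemma ta_shift: "ta \<eta> m x = ta \<eta> m 0 * ee (of_int m * x)"
  unfolding ta_def by (simp add: ee_add algebra_simps)

lemma ee_mult_nat: "ee (of_nat j * x) = ee x ^ j"
proof -
  have "ee (of_nat j * x) = exp (of_nat j * (2 * of_real pi * \<i> * x))"
    unfolding ee_def by (simp add: algebra_simps)
  then show ?thesis unfolding ee_def exp_of_nat_mult .
qed

lemma root_sum:
  assumes "N > 0"
  shows "(\<Sum>j<N. ee (of_int m * (of_nat j / of_nat N))) = (if int N dvd m then of_nat N else 0)"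
proof -
  define w where "w = ee (of_int m / of_nat N)"
  have "(\<Sum>j<N. ee (of_int m * (of_nat j / of_nat N))) = (\<Sum>j<N. w ^ j)"
    unfolding w_def ee_mult_nat[symmetric] by (simp add: algebra_simps)
  also have "\<dots> = (if w = 1 then of_nat N else (1 - w ^ N) / (1 - w))"
    by (rule sum_gp_strict)
  also have "w ^ N = 1"
  proof -
    have "w ^ N = ee (of_nat N * (of_int m / of_nat N))" unfolding w_def ee_mult_nat ..
    also have "of_nat N * (of_int m / of_nat N) = (of_int m :: complex)" using assms by simp
    finally show ?thesis by simp
  qed
  also have "(w = 1) = (int N dvd m)"
  proof
    assume "w = 1"
    then obtain k::int where "of_int m / of_nat N = (of_int k :: complex)"
      unfolding w_def ee_eq_1_iff by blast
    then have "(of_int m :: complex) = of_int (k * int N)" using assms by (simp add: field_simps)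
    then have "m = k * int N" using of_int_eq_iff by blast
    then show "int N dvd m" by simp
  next
    assume "int N dvd m"
    then obtain k where "m = int N * k" by blast
    then have "of_int m / of_nat N = (of_int k :: complex)" using assms by simp
    then show "w = 1" unfolding w_def by simp
  qed
  finally show ?thesis by simp
qed

lemma frac_not_lat:
  assumes "Im \<eta> > 0" "0 < j" "j < N"
  shows "of_nat j / of_nat N \<notin> lat \<eta>"
proof
  assume "of_nat j / of_nat N \<in> lat \<eta>"
  then obtain a b :: int where e: "of_nat j / of_nat N = of_int a + of_int b * \<eta>"
    unfolding lat_def by blast
  have "Im (of_nat j / of_nat N :: complex) = 0" by simp
  then have "of_int b * Im \<eta> = 0" using e by simp
  then have "b = 0" using assms(1) by simp
  then have "(of_nat j :: complex) = of_int (a * int N)" using e assms by (simp add: field_simps)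
  then have j: "int j = a * int N" using of_int_eq_iff by (metis of_int_of_nat_eq)
  show False
  proof (cases "a \<le> 0")
    case True
    then have "a * int N \<le> 0" by (simp add: mult_nonpos_nonneg)
    then show False using j assms by simp
  next
    case False
    then have "1 * int N \<le> a * int N" by (intro mult_right_mono) auto
    then have "int N \<le> int j" using j by simp
    then show False using assms(3) by simp
  qed
qed

lemma LL_nonzero:
  assumes "Im \<eta> > 0"
  shows "LL \<eta> \<noteq> 0"
proof
  assume L0: "LL \<eta> = 0"
  have th0: "theta \<eta> (of_nat j / of_nat N) = 0" if "j < N" for j N
  proof (cases "j = 0")
    case True then show ?thesis by (simp add: theta_zero)
  next
    case False
    then show ?thesis using theta_eq_LL_FF[OF assms frac_not_lat[OF assms _ that]] L0 by simp
  qed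
  define fN where "fN = (\<lambda>m::int. \<lambda>N::nat. if int N dvd m then ta \<eta> m 0 else 0)"
  define s where "s = (\<lambda>N. \<Sum>\<^sub>\<infinity>m\<in>UNIV. fN m N)"
  have s0: "s N = 0" if "N > 0" for N
  proof -
    have "0 = (\<Sum>j<N. theta \<eta> (of_nat j / of_nat N))" using th0 by simp
    also have "\<dots> = (\<Sum>j<N. \<Sum>\<^sub>\<infinity>m\<in>UNIV. ta \<eta> m (of_nat j / of_nat N))"
      unfolding theta_ta ..
    also have "\<dots> = (\<Sum>\<^sub>\<infinity>m\<in>UNIV. \<Sum>j<N. ta \<eta> m (of_nat j / of_nat N))"
      using infsum_finite_sum[of "{..<N}" "\<lambda>j m. ta \<eta> m (of_nat j / of_nat N)" UNIV] ta_summable[OF assms]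
      by simp
    also have "\<dots> = (\<Sum>\<^sub>\<infinity>m\<in>UNIV. of_nat N * fN m N)"
    proof (rule infsum_cong)
      fix m :: int
      have "(\<Sum>j<N. ta \<eta> m (of_nat j / of_nat N)) = ta \<eta> m 0 * (\<Sum>j<N. ee (of_int m * (of_nat j / of_nat N)))"
        by (subst ta_shift) (simp add: sum_distrib_left)
      also have "\<dots> = of_nat N * fN m N"
        unfolding root_sum[OF that] fN_def by simp
      finally show "(\<Sum>j<N. ta \<eta> m (of_nat j / of_nat N)) = of_nat N * fN m N" .
    qed
    also have "\<dots> = of_nat N * s N"
      unfolding s_def by (rule infsum_cmult_right')
    finally show ?thesis using that by simp
  qed
  have "s \<longlonglongrightarrow> 1"
  proof (rule swap_uniform_limit'[where F = "finite_subsets_at_top (UNIV::int set)" and S = UNIV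
        and f = "\<lambda>X N. \<Sum>m\<in>X. fN m N" and g = "\<lambda>X. \<Sum>m\<in>X. (if m = 0 then ta \<eta> m 0 else 0)"])
    show "\<forall>\<^sub>F X in finite_subsets_at_top UNIV. ((\<lambda>N. \<Sum>m\<in>X. fN m N) \<longlongrightarrow> (\<Sum>m\<in>X. (if m = 0 then ta \<eta> m 0 else 0))) sequentially"
    proof (rule eventually_finite_subsets_at_top_weakI)
      fix X :: "int set" assume X: "finite X"
      define N0 where "N0 = Suc (nat (\<Sum>m\<in>X. \<bar>m\<bar>))"
      have "\<forall>\<^sub>F N in sequentially. (\<Sum>m\<in>X. fN m N) = (\<Sum>m\<in>X. (if m = 0 then ta \<eta> m 0 else 0))"
        unfolding eventually_sequentially
      proof (intro exI[of _ N0] allI impI sum.cong refl)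
        fix N m assume N: "N0 \<le> N" and m: "m \<in> X"
        have "\<bar>m\<bar> \<le> (\<Sum>m\<in>X. \<bar>m\<bar>)"
          using X m by (intro member_le_sum) auto
        then have lt: "\<bar>m\<bar> < int N" using N unfolding N0_def by linarith
        have "int N dvd m \<longleftrightarrow> m = 0"
        proof
          assume d: "int N dvd m"
          show "m = 0"
          proof (rule ccontr)
            assume "m \<noteq> 0"
            then have "\<bar>int N\<bar> \<le> \<bar>m\<bar>" using dvd_imp_le_int d by blast
            then show False using lt by simp
          qed
        qed simp
        then show "fN m N = (if m = 0 then ta \<eta> m 0 else 0)" unfolding fN_def by simp
      qed
      then show "((\<lambda>N. \<Sum>m\<in>X. fN m N) \<longlongrightarrow> (\<Sum>m\<in>X. (if m = 0 then ta \<eta> m 0 else 0))) sequentially"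
        by (rule tendsto_eventually)
    qed
    have ta00: "ta \<eta> 0 0 = 1" unfolding ta_def by simp
    have "\<forall>\<^sub>F X in finite_subsets_at_top (UNIV::int set). (\<Sum>m\<in>X. (if m = 0 then ta \<eta> m 0 else 0)) = 1"
      unfolding eventually_finite_subsets_at_top
      by (intro exI[of _ "{0}"]) (auto simp: ta00 sum.delta')
    then show "((\<lambda>X. \<Sum>m\<in>X. (if m = 0 then ta \<eta> m 0 else 0)) \<longlongrightarrow> 1) (finite_subsets_at_top UNIV)"
      by (rule tendsto_eventually)
    define M where "M = (\<lambda>m::int. exp ((2*pi*0 + pi*Im \<eta>) * \<bar>of_int m\<bar> - pi*Im \<eta> * (of_int m)^2))"
    have Ms: "M summable_on UNIV" unfolding M_def
      by (rule gauss_summable_int) (use assms in simp)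
    have le: "norm (fN m N) \<le> M m" if "m \<in> UNIV" "N \<in> UNIV" for m N
      unfolding fN_def M_def using norm_ta_le[OF assms, of 0 0 m] by auto
    show "uniform_limit UNIV (\<lambda>X N. \<Sum>m\<in>X. fN m N) s (finite_subsets_at_top UNIV)"
      unfolding s_def by (rule Weierstrass_m_test_general[OF le Ms])
  qed (auto simp: finite_subsets_at_top_neq_bot)
  moreover have "s \<longlonglongrightarrow> 0"
    by (rule tendsto_eventually) (auto simp: eventually_sequentially intro!: exI[of _ 1] s0)
  ultimately show False using LIMSEQ_unique by fastforce
qed

lemma theta_nonzero:
  assumes "Im \<eta> > 0" "z \<notin> lat \<eta>"
  shows "theta \<eta> z \<noteq> 0"
  using theta_eq_LL_FF[OF assms] LL_nonzero[OF assms(1)] FF_nonzero[OF assms] by simp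

lemma theta_deriv_nonzero:
  assumes "Im \<eta> > 0"
  shows "deriv (theta \<eta>) 0 \<noteq> 0"
  using LL_nonzero[OF assms] unfolding LL_def by auto

lemma ee_sum: "finite A \<Longrightarrow> ee (\<Sum>m\<in>A. f m) = (\<Prod>m\<in>A. ee (f m))"
  unfolding ee_def sum_distrib_left by (simp add: exp_sum)

lemma sum_of_nat_lessThan: "(\<Sum>m<n. (of_nat m :: complex)) = of_nat n * (of_nat n - 1) / 2"
  by (induct n) (simp_all add: field_simps)

lemma m1_pow_sq: "((-1::complex) ^ n) * ((-1) ^ n) = 1"
  by (simp add: power_mult_distrib[symmetric])

lemma theta_idx_plus_n:
  assumes "n > 0"
  shows "theta_idx n \<eta> (\<alpha> + int n) z = theta_idx n \<eta> \<alpha> z"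
proof -
  define w where "w = (\<lambda>m::nat. z + of_nat m / of_nat n + of_int \<alpha> / of_nat n * \<eta>)"
  define P where "P = (\<Prod>m<n. theta \<eta> (w m))"
  define S where "S = (\<Sum>m<n. w m)"
  define A where "A = of_int \<alpha> * z + of_int \<alpha> / (2 * of_nat n) + of_int (\<alpha> * (\<alpha> - int n)) / (2 * of_nat n) * \<eta>"
  define A' where "A' = of_int (\<alpha> + int n) * z + of_int (\<alpha> + int n) / (2 * of_nat n) + of_int ((\<alpha> + int n) * (\<alpha> + int n - int n)) / (2 * of_nat n) * \<eta>"
  have f: "z + of_nat m / of_nat n + of_int (\<alpha> + int n) / of_nat n * \<eta> = w m + \<eta>" for m
    using assms by (simp add: w_def field_simps)
  have "(\<Prod>m<n. theta \<eta> (z + of_nat m / of_nat n + of_int (\<alpha> + int n) / of_nat n * \<eta>))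
      = (\<Prod>m<n. (-1) * (ee (- w m) * theta \<eta> (w m)))"
    unfolding f theta_plus_eta by simp
  also have "\<dots> = (-1) ^ n * (ee (- S) * P)"
    unfolding prod.distrib S_def P_def by (simp add: ee_sum sum_negf[symmetric])
  finally have 1: "theta_idx n \<eta> (\<alpha> + int n) z = ee A' * ((-1) ^ n * (ee (- S) * P))"
    unfolding theta_idx_def A'_def by simp
  have 2: "theta_idx n \<eta> \<alpha> z = ee A * P"
    unfolding theta_idx_def A_def P_def w_def by simp
  have S: "S = of_nat n * z + (of_nat n - 1) / 2 + of_int \<alpha> * \<eta>"
    unfolding S_def w_def using assms
    by (simp add: sum.distrib sum_divide_distrib[symmetric] sum_of_nat_lessThan field_simps)
  have e: "A' + - S = A + 1 + - (of_nat n * (1/2))"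
    unfolding A'_def A_def S using assms by (simp add: field_simps)
  have "ee A' * ee (- S) = ee (A' + - S)" by (rule ee_add[symmetric])
  also have "\<dots> = ee (A + 1 + - (of_nat n * (1/2)))" by (simp only: e)
  also have "\<dots> = ee A * inverse (ee (1/2) ^ n)" unfolding ee_add ee_neg ee_mult_nat by simp
  also have "\<dots> = ee A * inverse ((-1) ^ n)" by (simp add: ee_half)
  finally have k: "ee A' * ee (- S) = ee A * inverse ((-1) ^ n)" .
  have "ee A' * ((-1) ^ n * ee (- S)) = (ee A' * ee (- S)) * (-1) ^ n" by (simp only: mult_ac)
  also have "\<dots> = ee A * (inverse ((-1) ^ n) * (-1) ^ n)" unfolding k by (simp only: mult_ac)
  also have "\<dots> = ee A" by simp
  finally have k2: "ee A' * ((-1) ^ n * ee (- S)) = ee A" .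
  have "theta_idx n \<eta> (\<alpha> + int n) z = (ee A' * ((-1) ^ n * ee (- S))) * P"
    using 1 by (simp add: algebra_simps)
  then show ?thesis using k2 2 by simp
qed

lemma theta_idx_plus_nq:
  assumes "n > 0"
  shows "theta_idx n \<eta> (\<alpha> + int n * q) z = theta_idx n \<eta> \<alpha> z"
proof (induct q rule: int_induct[where k=0])
  case base then show ?case by simp
next
  case (step1 i)
  have "theta_idx n \<eta> (\<alpha> + int n * (i + 1)) z = theta_idx n \<eta> ((\<alpha> + int n * i) + int n) z"
    by (simp add: algebra_simps)
  also have "\<dots> = theta_idx n \<eta> (\<alpha> + int n * i) z" by (rule theta_idx_plus_n[OF assms])
  finally show ?case using step1 by simp
next
  case (step2 i)
  have "theta_idx n \<eta> (\<alpha> + int n * i) z = theta_idx n \<eta> ((\<alpha> + int n * (i - 1)) + int n) z"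
    by (simp add: algebra_simps)
  also have "\<dots> = theta_idx n \<eta> (\<alpha> + int n * (i - 1)) z" by (rule theta_idx_plus_n[OF assms])
  finally show ?case using step2 by simp
qed

lemma theta_idx_mod:
  assumes "n > 0"
  shows "theta_idx n \<eta> \<alpha> z = theta_idx n \<eta> (\<alpha> mod int n) z"
proof -
  have "\<alpha> = \<alpha> mod int n + int n * (\<alpha> div int n)" by simp
  then show ?thesis using theta_idx_plus_nq[OF assms, where \<alpha>="\<alpha> mod int n" and q="\<alpha> div int n" and \<eta>=\<eta> and z=z] by simp
qed

lemma theta_idx_cont:
  assumes "Im \<eta> > 0"
  shows "continuous_on UNIV (theta_idx n \<eta> \<alpha>)"
proof -
  have c: "continuous_on UNIV (theta \<eta>)" by (rule theta_cont[OF assms])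
  have "continuous_on UNIV (\<lambda>z. theta \<eta> (z + of_nat m / of_nat n + of_int \<alpha> / of_nat n * \<eta>))" for m
    by (rule continuous_on_compose2[OF c]) (auto intro!: continuous_intros)
  then show ?thesis unfolding theta_idx_def[abs_def] ee_def
    by (intro continuous_intros) auto
qed

lemma theta_idx_tendsto:
  assumes "Im \<eta> > 0" "(f \<longlongrightarrow> 0) F"
  shows "((\<lambda>x. theta_idx n \<eta> \<alpha> (f x)) \<longlongrightarrow> theta_idx n \<eta> \<alpha> 0) F"
proof -
  have "isCont (theta_idx n \<eta> \<alpha>) 0"
    using theta_idx_cont[OF assms(1)] by (simp add: continuous_on_eq_continuous_at)
  then show ?thesis by (rule isCont_tendsto_compose[OF _ assms(2)])
qed

lemma theta_idx_nonzero0: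
  assumes "Im \<eta> > 0" "n > 0" "\<not> int n dvd \<alpha>"
  shows "theta_idx n \<eta> \<alpha> 0 \<noteq> 0"
proof -
  have "theta \<eta> (of_nat m / of_nat n + of_int \<alpha> / of_nat n * \<eta>) \<noteq> 0" for m
  proof (rule theta_nonzero[OF assms(1)])
    show "of_nat m / of_nat n + of_int \<alpha> / of_nat n * \<eta> \<notin> lat \<eta>"
    proof
      assume "of_nat m / of_nat n + of_int \<alpha> / of_nat n * \<eta> \<in> lat \<eta>"
      then obtain a b :: int where e: "of_nat m / of_nat n + of_int \<alpha> / of_nat n * \<eta> = of_int a + of_int b * \<eta>"
        unfolding lat_def by blast
      have "Im (of_nat m / of_nat n + of_int \<alpha> / of_nat n * \<eta>) = of_int \<alpha> / of_nat n * Im \<eta>"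
        by simp
      moreover have "Im (of_int a + of_int b * \<eta>) = of_int b * Im \<eta>" by simp
      ultimately have "of_int \<alpha> / of_nat n * Im \<eta> = of_int b * Im \<eta>" using e by metis
      then have "of_int \<alpha> / of_nat n = (of_int b :: real)" using assms(1) by (metis mult_right_cancel order_less_irrefl)
      then have "(of_int \<alpha> :: real) = of_int (b * int n)" using assms(2) by (simp add: field_simps)
      then have "\<alpha> = b * int n" using of_int_eq_iff by blast
      then show False using assms(3) by simp
    qed
  qed
  then show ?thesis unfolding theta_idx_def by simp
qed

definition Sfac :: "nat \<Rightarrow> complex \<Rightarrow> complex \<Rightarrow> complex" where
  "Sfac n \<eta> z = (\<Prod>m<n - 1. theta \<eta> (z + of_nat (Suc m) / of_nat n))"

lemma theta_idx0:
  assumes "n > 0"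
  shows "theta_idx n \<eta> 0 z = theta \<eta> z * Sfac n \<eta> z"
proof -
  obtain n' where n: "n = Suc n'" using assms by (cases n) auto
  show ?thesis unfolding theta_idx_def Sfac_def n
    by (simp add: prod.lessThan_Suc_shift del: prod.lessThan_Suc)
qed

lemma Sfac0:
  assumes "Im \<eta> > 0"
  shows "Sfac n \<eta> 0 \<noteq> 0"
proof -
  have "theta \<eta> (0 + of_nat (Suc m) / of_nat n) \<noteq> 0" if "m < n - 1" for m
    using theta_nonzero[OF assms frac_not_lat[OF assms, of "Suc m" n]] that by simp
  then show ?thesis unfolding Sfac_def by (simp add: prod_zero_iff)
qed

lemma Sfac_cont:
  assumes "Im \<eta> > 0"
  shows "isCont (Sfac n \<eta>) 0"
proof -
  have c: "continuous_on UNIV (theta \<eta>)" by (rule theta_cont[OF assms])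
  have "continuous_on UNIV (\<lambda>z. theta \<eta> (z + of_nat (Suc m) / of_nat n))" for m
    by (rule continuous_on_compose2[OF c]) (auto intro!: continuous_intros)
  then have "continuous_on UNIV (Sfac n \<eta>)"
    unfolding Sfac_def[abs_def] by (intro continuous_intros) auto
  then show ?thesis by (simp add: continuous_on_eq_continuous_at)
qed

lemma theta_idx0_ratio:
  assumes "Im \<eta> > 0" "n > 0"
  shows "((\<lambda>\<tau>. theta_idx n \<eta> 0 (p * \<tau>) / theta_idx n \<eta> 0 \<tau>) \<longlongrightarrow> p) (at 0)"
proof (cases "p = 0")
  case True
  then show ?thesis by (simp add: theta_idx0[OF assms(2)] theta_zero)
next
  case False
  define G where "G = (\<lambda>w. theta_idx n \<eta> 0 w / w)"
  define C where "C = deriv (theta \<eta>) 0 * Sfac n \<eta> 0"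
  have C0: "C \<noteq> 0" unfolding C_def using theta_deriv_nonzero[OF assms(1)] Sfac0[OF assms(1)] by simp
  have G: "(G \<longlongrightarrow> C) (at 0)"
  proof -
    have "((\<lambda>w. (theta \<eta> w / w) * Sfac n \<eta> w) \<longlongrightarrow> C) (at 0)"
      unfolding C_def
      by (intro tendsto_intros theta_deriv0[OF assms(1)])
         (use Sfac_cont[OF assms(1)] in \<open>simp add: isCont_def\<close>)
    moreover have "(\<lambda>w. (theta \<eta> w / w) * Sfac n \<eta> w) = G"
      unfolding G_def theta_idx0[OF assms(2)] by (simp add: fun_eq_iff)
    ultimately show ?thesis by simp
  qed
  have lin: "filterlim (\<lambda>\<tau>. p * \<tau>) (at 0) (at 0)"
  proof -
    have "((\<lambda>\<tau>. p * \<tau>) \<longlongrightarrow> 0) (at 0)" by (auto intro!: tendsto_eq_intros)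
    moreover have "\<forall>\<^sub>F \<tau> in at 0. p * \<tau> \<noteq> 0"
      using False by (auto simp: eventually_at_filter)
    ultimately show ?thesis by (simp add: filterlim_at)
  qed
  have GG: "((\<lambda>\<tau>. G (p * \<tau>)) \<longlongrightarrow> C) (at 0)"
    by (rule filterlim_compose[OF G lin])
  have "((\<lambda>\<tau>. p * G (p * \<tau>) / G \<tau>) \<longlongrightarrow> p * C / C) (at 0)"
    by (intro tendsto_intros GG G C0)
  moreover have "p * C / C = p" using C0 by simp
  moreover have "\<forall>\<^sub>F \<tau> in at 0. p * G (p * \<tau>) / G \<tau> = theta_idx n \<eta> 0 (p * \<tau>) / theta_idx n \<eta> 0 \<tau>"
    unfolding eventually_at_filter
    by (intro always_eventually allI impI) (use False in \<open>simp add: G_def field_simps\<close>)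
  ultimately show ?thesis using Lim_transform_eventually by metis
qed

lemma mod_cancel_left_int:
  fixes j x y N :: int
  assumes "(j - x) mod N = (j - y) mod N"
  shows "x mod N = y mod N"
proof -
  have "(j - (j - x)) mod N = (j - (j - y)) mod N" by (rule mod_diff_cong[OF refl assms])
  then show ?thesis by simp
qed

lemma not_dvd_range:
  fixes r N :: int
  assumes "0 < r" "r < N"
  shows "\<not> N dvd r"
  using assms zdvd_imp_le by fastforce

lemma main_limit:
  fixes n :: nat and k m i j a b :: int and \<eta> :: complex
  assumes \<eta>: "Im \<eta> > 0" and n: "n > 0" and cop: "coprime k (int n)"
    and i: "0 \<le> i" "i < int n" and j: "0 \<le> j" "j < int n"
    and a: "0 \<le> a" "a < int n" and b: "0 \<le> b" "b < int n"
  shows "((\<lambda>\<tau>. R_coef n k \<eta> \<tau> (of_int m * \<tau>) i j a b) \<longlongrightarrow> sym_coef n m i j a b) (at 0)"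
proof -
  define N where "N = int n"
  have N0: "N > 0" using n by (simp add: N_def)
  have [simp]: "i mod N = i" "j mod N = j" "a mod N = a" "b mod N = b"
    using i j a b by (simp_all add: N_def)
  define T where "T = theta_idx n \<eta>"
  define D where "D = (\<Prod>\<beta>\<in>{1..<N}. T \<beta> 0)"
  have Tnz: "T \<beta> 0 \<noteq> 0" if "\<not> N dvd \<beta>" for \<beta>
    unfolding T_def using theta_idx_nonzero0[OF \<eta> n] that by (simp add: N_def)
  have D0: "D \<noteq> 0"
    unfolding D_def using Tnz not_dvd_range by (auto simp: prod_zero_iff)
  have T00: "T 0 0 = 0" by (simp add: T_def theta_idx0[OF n] theta_zero)
  have Tmod: "T \<alpha> z = T (\<alpha> mod N) z" for \<alpha> z
    unfolding T_def N_def by (rule theta_idx_mod[OF n])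
  have kr: "T (k * r) 0 \<noteq> 0" if "0 < r" "r < N" for r
  proof (rule Tnz)
    show "\<not> N dvd k * r"
    proof
      assume "N dvd k * r"
      then have "N dvd r" using cop coprime_dvd_mult_right_iff[of N k r]
        by (simp add: N_def coprime_commute)
      then show False using not_dvd_range[OF that] by simp
    qed
  qed
  have t1: "((\<lambda>\<tau>. - (of_int m * \<tau>)) \<longlongrightarrow> 0) (at (0::complex))" by (auto intro!: tendsto_eq_intros)
  have t2: "((\<lambda>\<tau>. - (of_int m * \<tau>) + \<tau>) \<longlongrightarrow> 0) (at (0::complex))" by (auto intro!: tendsto_eq_intros)
  have t3: "((\<lambda>\<tau>. \<tau>) \<longlongrightarrow> 0) (at (0::complex))" by (rule tendsto_ident_at)
  have T1: "((\<lambda>\<tau>. T \<alpha> (- (of_int m * \<tau>))) \<longlongrightarrow> T \<alpha> 0) (at 0)" for \<alpha>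
    unfolding T_def by (rule theta_idx_tendsto[OF \<eta> t1])
  have T2: "((\<lambda>\<tau>. T \<alpha> (- (of_int m * \<tau>) + \<tau>)) \<longlongrightarrow> T \<alpha> 0) (at 0)" for \<alpha>
    unfolding T_def by (rule theta_idx_tendsto[OF \<eta> t2])
  have T3: "((\<lambda>\<tau>. T \<alpha> \<tau>) \<longlongrightarrow> T \<alpha> 0) (at 0)" for \<alpha>
    unfolding T_def by (rule theta_idx_tendsto[OF \<eta> t3])
  have Tratio: "((\<lambda>\<tau>. T 0 (p * \<tau>) / T 0 \<tau>) \<longlongrightarrow> p) (at 0)" for p
    unfolding T_def by (rule theta_idx0_ratio[OF \<eta> n])
  have P1: "((\<lambda>\<tau>. \<Prod>\<beta>\<in>B. T \<beta> (- (of_int m * \<tau>))) \<longlongrightarrow> (\<Prod>\<beta>\<in>B. T \<beta> 0)) (at 0)" for B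
    by (intro tendsto_prod T1)
  define r0 where "r0 = (j - a) mod N"
  have r0r: "0 \<le> r0" "r0 < N" using N0 by (simp_all add: r0_def)
  define d where "d = (j - i) mod N"
  have dr: "0 \<le> d" "d < N" using N0 by (simp_all add: d_def)
  define C where "C = (\<lambda>r. (j - r) mod N = a mod N \<and> (i + r) mod N = b mod N)"
  define X where "X = (\<lambda>r \<tau>. (\<Prod>\<beta>\<in>{0..<N} - {(j - i - r) mod N}. T \<beta> (- (of_int m * \<tau>))) / D
        * T (j - i + r * (k - 1)) (- (of_int m * \<tau>) + \<tau>) / T (k * r) \<tau>)"
  have r0in: "r0 \<in> {0..<N}" using r0r by simp
  have Rform: "R_coef n k \<eta> \<tau> (of_int m * \<tau>) i j a b = (if C r0 then X r0 \<tau> else 0)" for \<tau>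
  proof -
    have "R_coef n k \<eta> \<tau> (of_int m * \<tau>) i j a b = (\<Sum>r\<in>{0..<N}. if C r then X r \<tau> else 0)"
      unfolding R_coef_def C_def X_def D_def T_def N_def ..
    also have "\<dots> = (\<Sum>r\<in>{0..<N}. if r = r0 then (if C r0 then X r0 \<tau> else 0) else 0)"
    proof (rule sum.cong[OF refl])
      fix r assume r: "r \<in> {0..<N}"
      have Cimp: "C r \<Longrightarrow> r = r0"
      proof -
        assume "C r"
        then have "(j - r) mod N = a mod N" by (simp add: C_def)
        then have "(j - (j - r)) mod N = (j - a) mod N" by (rule mod_diff_cong[OF refl])
        then have "r mod N = r0" by (simp add: r0_def)
        then show "r = r0" using r by simp
      qed
      show "(if C r then X r \<tau> else 0) = (if r = r0 then (if C r0 then X r0 \<tau> else 0) else 0)"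
      proof (cases "C r")
        case True
        then have "r = r0" by (rule Cimp)
        then show ?thesis using True by simp
      next
        case False
        show ?thesis
        proof (cases "r = r0")
          case True then show ?thesis using False by simp
        next
          case F2: False then show ?thesis using False by simp
        qed
      qed
    qed
    also have "\<dots> = (if r0 \<in> {0..<N} then (if C r0 then X r0 \<tau> else 0) else 0)"
      by (simp only: sum.delta[OF finite_atLeastLessThan_int])
    also have "\<dots> = (if C r0 then X r0 \<tau> else 0)"
      by (simp only: r0in if_True)
    finally show ?thesis .
  qed
  have Cr0: "C r0 \<longleftrightarrow> (i + r0) mod N = b"
  proof -
    have "(j - r0) mod N = (j - (j - a)) mod N" unfolding r0_def by (rule mod_diff_right_eq)
    then show ?thesis by (simp add: C_def)
  qed
  have sym_eq: "sym_coef n m i j a b = (if a = i \<and> b = j then 1 else 0) - of_int m * (if a = j \<and> b = i then 1 else 0)"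
    unfolding sym_coef_def N_def[symmetric] by simp
  have symv: "sym_coef n m i j a b = (if P1 then 1 else 0) - of_int m * (if P2 then 1 else 0)"
    if "(a = i \<and> b = j) = P1" "(a = j \<and> b = i) = P2" for P1 P2
    unfolding sym_eq that ..
  have ai: "a = i \<longleftrightarrow> r0 = d"
  proof
    assume "r0 = d"
    then have "(j - a) mod N = (j - i) mod N" by (simp add: r0_def d_def)
    then have "a mod N = i mod N" by (rule mod_cancel_left_int)
    then show "a = i" by simp
  qed (simp add: r0_def d_def)
  have aj: "a = j \<longleftrightarrow> r0 = 0"
  proof
    assume "r0 = 0"
    then have "(j - a) mod N = (j - j) mod N" by (simp add: r0_def)
    then have "a mod N = j mod N" by (rule mod_cancel_left_int)
    then show "a = j" by simp
  qed (simp add: r0_def)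
  show ?thesis
  proof (cases "C r0")
    case False
    have "\<not> (a = i \<and> b = j)"
    proof
      assume ab: "a = i \<and> b = j"
      then have "r0 = d" using ai by simp
      then have "(i + r0) mod N = (i + (j - i)) mod N" by (simp add: d_def mod_add_right_eq)
      then have "C r0" using Cr0 ab by simp
      then show False using False by simp
    qed
    moreover have "\<not> (a = j \<and> b = i)"
    proof
      assume ab: "a = j \<and> b = i"
      then have "r0 = 0" using aj by simp
      then have "C r0" using Cr0 ab by simp
      then show False using False by simp
    qed
    ultimately have "sym_coef n m i j a b = (if False then 1 else 0) - of_int m * (if False then 1 else 0)"
      by (intro symv) auto
    then have "sym_coef n m i j a b = 0" by simp
    moreover have "(\<lambda>\<tau>. R_coef n k \<eta> \<tau> (of_int m * \<tau>) i j a b) = (\<lambda>\<tau>. 0)"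
      using False by (simp only: Rform if_False)
    ultimately show ?thesis by simp
  next
    case True
    then have bC: "(i + r0) mod N = b" using Cr0 by simp
    have RX: "(\<lambda>\<tau>. R_coef n k \<eta> \<tau> (of_int m * \<tau>) i j a b) = X r0"
      using True by (simp add: Rform fun_eq_iff)
    show ?thesis unfolding RX
    proof (cases "r0 = 0")
      case False note r00 = False
      show "(X r0 \<longlongrightarrow> sym_coef n m i j a b) (at 0)"
      proof (cases "r0 = d")
        case False
        have nz: "(j - i - r0) mod N \<noteq> 0"
        proof
          assume "(j - i - r0) mod N = 0"
          then have "N dvd (j - i) - r0" by (simp add: dvd_eq_mod_eq_0)
          then have "(j - i) mod N = r0 mod N" by (simp add: mod_eq_dvd_iff)
          then show False using False r0r by (simp add: d_def)
        qed
        have P0: "(\<Prod>\<beta>\<in>{0..<N} - {(j - i - r0) mod N}. T \<beta> 0) = 0"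
          using nz N0 T00 by (intro prod_zero) auto
        have lim0: "(X r0 \<longlongrightarrow> (\<Prod>\<beta>\<in>{0..<N} - {(j - i - r0) mod N}. T \<beta> 0) / D
            * T (j - i + r0 * (k - 1)) 0 / T (k * r0) 0) (at 0)"
          unfolding X_def
          by (intro tendsto_divide tendsto_mult P1 T2 T3 tendsto_const D0 kr) (use r0r r00 in auto)
        have "(X r0 \<longlongrightarrow> 0) (at 0)" using lim0 unfolding P0 by simp
        moreover have "sym_coef n m i j a b = 0"
        proof -
          have "a \<noteq> i" "a \<noteq> j" using ai aj False r00 by auto
          then have "sym_coef n m i j a b = (if False then 1 else 0) - of_int m * (if False then 1 else 0)"
            by (intro symv) auto
          then show ?thesis by simp
        qed
        ultimately show ?thesis by simp
      next
        case True
        have z: "(j - i - r0) mod N = 0" unfolding True d_def by (simp add: mod_diff_right_eq)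
        have B: "{0..<N} - {0} = {1..<N}" by auto
        have idx: "j - i + r0 * (k - 1) = k * r0 + N * ((j - i) div N)"
        proof -
          have "j - i = N * ((j - i) div N) + r0" unfolding True d_def by simp
          then show ?thesis by (simp add: algebra_simps)
        qed
        have Tidx: "T (j - i + r0 * (k - 1)) 0 = T (k * r0) 0"
          unfolding idx T_def N_def by (rule theta_idx_plus_nq[OF n])
        have k0: "T (k * r0) 0 \<noteq> 0" using kr r0r r00 by simp
        have "(X r0 \<longlongrightarrow> (\<Prod>\<beta>\<in>{0..<N} - {(j - i - r0) mod N}. T \<beta> 0) / D
            * T (j - i + r0 * (k - 1)) 0 / T (k * r0) 0) (at 0)"
          unfolding X_def
          by (intro tendsto_divide tendsto_mult P1 T2 T3 tendsto_const D0 kr) (use r0r r00 in auto)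
        moreover have "(\<Prod>\<beta>\<in>{0..<N} - {(j - i - r0) mod N}. T \<beta> 0) / D
            * T (j - i + r0 * (k - 1)) 0 / T (k * r0) 0 = 1"
          unfolding z B D_def[symmetric] Tidx using D0 k0 by simp
        ultimately have lim1: "(X r0 \<longlongrightarrow> 1) (at 0)" by simp
        have "a = i" using ai True by simp
        moreover have "b = j"
        proof -
          have "(i + r0) mod N = (i + (j - i)) mod N" unfolding True d_def by (simp add: mod_add_right_eq)
          then show ?thesis using bC by simp
        qed
        moreover have "a \<noteq> j" using aj r00 by simp
        ultimately have "sym_coef n m i j a b = (if True then 1 else 0) - of_int m * (if False then 1 else 0)"
          by (intro symv) auto
        then have "sym_coef n m i j a b = 1" by simp
        then show ?thesis using lim1 by simp
      qed
    next
      case True note r00 = True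
      have aJ: "a = j" using aj True by simp
      have bI: "b = i" using bC True by simp
      show "(X r0 \<longlongrightarrow> sym_coef n m i j a b) (at 0)"
      proof (cases "d = 0")
        case False
        have ij: "i \<noteq> j" using False by (auto simp: d_def)
        have e1: "(j - i - r0) mod N = d" by (simp add: True d_def)
        define B where "B = {0..<N} - {d}"
        have B0: "0 \<in> B" using False N0 by (simp add: B_def)
        have Xeq: "X r0 \<tau> = (T 0 ((- of_int m) * \<tau>) / T 0 \<tau>) *
             ((\<Prod>\<beta>\<in>B - {0}. T \<beta> (- (of_int m * \<tau>))) * T (j - i) (- (of_int m * \<tau>) + \<tau>) / D)" for \<tau>
        proof -
          have pr: "(\<Prod>\<beta>\<in>B. T \<beta> (- (of_int m * \<tau>))) = T 0 (- (of_int m * \<tau>)) * (\<Prod>\<beta>\<in>B - {0}. T \<beta> (- (of_int m * \<tau>)))"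
            by (rule prod.remove) (use B0 in \<open>auto simp: B_def\<close>)
          have "X r0 \<tau> = (\<Prod>\<beta>\<in>{0..<N} - {d}. T \<beta> (- (of_int m * \<tau>))) / D
            * T (j - i + r0 * (k - 1)) (- (of_int m * \<tau>) + \<tau>) / T (k * r0) \<tau>"
            unfolding X_def e1 ..
          also have "\<dots> = (\<Prod>\<beta>\<in>B. T \<beta> (- (of_int m * \<tau>))) / D
            * T (j - i) (- (of_int m * \<tau>) + \<tau>) / T 0 \<tau>"
            unfolding B_def True by simp
          also have "\<dots> = (T 0 ((- of_int m) * \<tau>) / T 0 \<tau>) *
             ((\<Prod>\<beta>\<in>B - {0}. T \<beta> (- (of_int m * \<tau>))) * T (j - i) (- (of_int m * \<tau>) + \<tau>) / D)"
            unfolding pr by (simp add: divide_inverse mult_ac)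
          finally show ?thesis .
        qed
        have dB: "d \<in> {1..<N}" using False dr by auto
        have "(\<Prod>\<beta>\<in>B - {0}. T \<beta> 0) * T (j - i) 0 = D"
        proof -
          have "B - {0} = {1..<N} - {d}" by (auto simp: B_def)
          moreover have "T (j - i) 0 = T d 0" unfolding d_def by (rule Tmod)
          ultimately show ?thesis unfolding D_def using dB by (simp add: prod.remove mult.commute)
        qed
        then have lim2: "((\<lambda>\<tau>. (\<Prod>\<beta>\<in>B - {0}. T \<beta> (- (of_int m * \<tau>))) * T (j - i) (- (of_int m * \<tau>) + \<tau>) / D) \<longlongrightarrow> 1) (at 0)"
          using tendsto_divide[OF tendsto_mult[OF P1[of "B - {0}"] T2[of "j - i"]] tendsto_const[of D] D0] D0
          by simp
        have "(X r0 \<longlongrightarrow> (- of_int m) * 1) (at 0)"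
          unfolding Xeq[abs_def] by (rule tendsto_mult[OF Tratio lim2])
        moreover have "sym_coef n m i j a b = - of_int m"
        proof -
          have "a \<noteq> i" using aJ ij by simp
          then have "sym_coef n m i j a b = (if False then 1 else 0) - of_int m * (if True then 1 else 0)"
            by (intro symv) (auto simp: aJ bI)
          then show ?thesis by simp
        qed
        ultimately show ?thesis by simp
      next
        case True
        have ij: "i = j"
        proof -
          have "N dvd j - i" using True by (simp add: d_def dvd_eq_mod_eq_0)
          then have "j mod N = i mod N" by (simp only: mod_eq_dvd_iff)
          then show ?thesis by simp
        qed
        have e1: "(j - i - r0) mod N = 0" by (simp add: r00 ij)
        have B: "{0..<N} - {0} = {1..<N}" by auto
        have Xeq: "X r0 \<tau> = ((\<Prod>\<beta>\<in>{1..<N}. T \<beta> (- (of_int m * \<tau>))) / D) * (T 0 ((1 - of_int m) * \<tau>) / T 0 \<tau>)" for \<tau>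
        proof -
          have arg: "- (of_int m * \<tau>) + \<tau> = (1 - of_int m) * \<tau>" by (simp add: algebra_simps)
          have "X r0 \<tau> = (\<Prod>\<beta>\<in>{0..<N} - {0}. T \<beta> (- (of_int m * \<tau>))) / D
            * T (j - i + r0 * (k - 1)) (- (of_int m * \<tau>) + \<tau>) / T (k * r0) \<tau>"
            unfolding X_def e1 ..
          also have "\<dots> = (\<Prod>\<beta>\<in>{1..<N}. T \<beta> (- (of_int m * \<tau>))) / D
            * T 0 ((1 - of_int m) * \<tau>) / T 0 \<tau>"
            unfolding B arg r00 ij by simp
          also have "\<dots> = ((\<Prod>\<beta>\<in>{1..<N}. T \<beta> (- (of_int m * \<tau>))) / D) * (T 0 ((1 - of_int m) * \<tau>) / T 0 \<tau>)"
            by simp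
          finally show ?thesis .
        qed
        have "(X r0 \<longlongrightarrow> (D / D) * (1 - of_int m)) (at 0)"
          unfolding Xeq[abs_def] D_def
          by (intro tendsto_mult tendsto_divide P1 tendsto_const Tratio) (use D0 in \<open>simp add: D_def\<close>)
        moreover have "sym_coef n m i j a b = 1 - of_int m"
        proof -
          have "sym_coef n m i j a b = (if True then 1 else 0) - of_int m * (if True then 1 else 0)"
            by (intro symv) (auto simp: aJ bI ij)
          then show ?thesis by simp
        qed
        ultimately show ?thesis using D0 by simp
      qed
    qed
  qed
qed

theorem proposition5p2:
  fixes n :: nat and k m :: int and \<eta> :: complex
  assumes "1 \<le> k" and "k < int n" and "coprime k (int n)" and "Im \<eta> > 0"
  shows "\<forall>i\<in>{0..<int n}. \<forall>j\<in>{0..<int n}. \<forall>a\<in>{0..<int n}. \<forall>b\<in>{0..<int n}.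
           ((\<lambda>\<tau>. R_coef n k \<eta> \<tau> (of_int m * \<tau>) i j a b) \<longlongrightarrow> sym_coef n m i j a b)
             (at 0 within (- lattice_div n \<eta>))"
proof (intro ballI)
  fix i j a b assume "i \<in> {0..<int n}" "j \<in> {0..<int n}" "a \<in> {0..<int n}" "b \<in> {0..<int n}"
  moreover have "n > 0" using assms by simp
  ultimately have "((\<lambda>\<tau>. R_coef n k \<eta> \<tau> (of_int m * \<tau>) i j a b) \<longlongrightarrow> sym_coef n m i j a b) (at 0)"
    by (intro main_limit assms(3,4)) auto
  then show "((\<lambda>\<tau>. R_coef n k \<eta> \<tau> (of_int m * \<tau>) i j a b) \<longlongrightarrow> sym_coef n m i j a b)
             (at 0 within (- lattice_div n \<eta>))"
    by (rule tendsto_mono[OF at_le[OF subset_UNIV]])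
qed

end
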